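(* Let $f:\mathbb{R}^d\to\mathbb{R}$ be $L$-smooth (i.e. $\nabla f$ is $L$-Lipschitz in $\ell_2$). Let $\varepsilon>0$, $c_\infty>0$, $\lambda>0$, $\mu\in[0,1)$, and set $\lambda_k:=\lambda(1-\mu)^k$. Let $(\mathbf{n}_k)_{k\ge0}$ be vectors with nonnegative entries such that for all $k$ and all coordinates $i$: $\sqrt{(\mathbf{n}_k)_i}+\varepsilon\le c_\infty$ and $\dfrac{\sqrt{(\mathbf{n}_k)_i}+\varepsilon}{\sqrt{(\mathbf{n}_{k+1})_i}+\varepsilon}\ge 1-\mu$. Define $F_k(\boldsymbol{\theta}):=f(\boldsymbol{\theta})+\frac{\lambda_k}{2}\|\boldsymbol{\theta}\|^2_{\sqrt{\mathbf{n}_k}}$. Given $\boldsymbol{\theta}_k,\mathbf{u}_k\in\mathbb{R}^d$, let $$\boldsymbol{\theta}_{k+1}=\arg\min_{\boldsymbol{\theta}}\Big(\tfrac{\lambda_k}{2}\|\boldsymbol{\theta}\|^2_{\sqrt{\mathbf{n}_k}}+f(\boldsymbol{\theta}_k)+\langle\mathbf{u}_k,\boldsymbol{\theta}-\boldsymbol{\theta}_k\rangle+\tfrac{1}{2\eta}\|\boldsymbol{\theta}-\boldsymbol{\theta}_k\|^2_{\sqrt{\mathbf{n}_k}}\Big)$$ with $0<\eta\le\min\{\frac{\varepsilon}{3L},\frac{1}{10\lambda}\}$. Then, with $\mathbf{g}_k:=\nabla f(\boldsymbol{\theta}_k)$ and $\tilde{\boldsymbol{\theta}}_k:=(\sqrt{\mathbf{n}_k}+\varepsilon)\circ\boldsymbol{\theta}_k$,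 $$F_{k+1}(\boldsymbol{\theta}_{k+1})\le F_k(\boldsymbol{\theta}_k)-\frac{\eta}{4c_\infty}\|\mathbf{u}_k+\lambda_k\tilde{\boldsymbol{\theta}}_k\|^2+\frac{\eta}{2\varepsilon}\|\mathbf{g}_k-\mathbf{u}_k\|^2.$$
   Context: For a vector $\mathbf{n}\ge0$ (entrywise) and $\varepsilon>0$, $\|\mathbf{x}\|^2_{\sqrt{\mathbf{n}}}:=\langle\mathbf{x},(\sqrt{\mathbf{n}}+\varepsilon)\circ\mathbf{x}\rangle$, where the square root is taken coordinatewise and $\circ$ is the coordinatewise product. $\|\cdot\|$ is the Euclidean norm. *)

theory Defs
  imports "HOL-Analysis.Analysis"
begin

text \<open>Weighted squared norm: \<open>\<parallel>x\<parallel>^2_{sqrt n} = <x, (sqrt n + eps) o x>\<close>.\<close>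
definition wsqnorm :: "real \<Rightarrow> real ^ 'd \<Rightarrow> real ^ 'd \<Rightarrow> real" where
  "wsqnorm eps n x = (\<Sum>i\<in>UNIV. (sqrt (n $ i) + eps) * (x $ i)^2)"

definition L_smooth :: "real \<Rightarrow> (real ^ 'd \<Rightarrow> real) \<Rightarrow> (real ^ 'd \<Rightarrow> real ^ 'd) \<Rightarrow> bool" where
  "L_smooth L f G \<longleftrightarrow>
     (\<forall>x. (f has_derivative (\<lambda>h. G x \<bullet> h)) (at x)) \<and>
     (\<forall>x y. norm (G x - G y) \<le> L * norm (x - y))"

end

theory Submission imports Defs begin
lemma descent:
  fixes f :: "real ^ 'd \<Rightarrow> real" and G :: "real ^ 'd \<Rightarrow> real ^ 'd"
  assumes smooth: "L_smooth L f G"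
  shows "f y \<le> f x + G x \<bullet> (y - x) + L / 2 * (norm (y - x))\<^sup>2"
proof -
  define d where "d = y - x"
  have fd: "\<And>z. (f has_derivative (\<lambda>h. G z \<bullet> h)) (at z)" and lip: "\<And>a b. norm (G a - G b) \<le> L * norm (a - b)"
    using smooth unfolding L_smooth_def by auto
  define \<phi> where "\<phi> t = f (x + t *\<^sub>R d) - t * (G x \<bullet> d) - L / 2 * t^2 * (norm d)^2" for t
  define \<phi>' where "\<phi>' t = G (x + t *\<^sub>R d) \<bullet> d - G x \<bullet> d - L * t * (norm d)^2" for t
  have der: "DERIV \<phi> t :> \<phi>' t" for t
  proof -
    have l: "((\<lambda>t. x + t *\<^sub>R d) has_derivative (\<lambda>h. h *\<^sub>R d)) (at t)"
      by (auto intro!: derivative_eq_intros)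
    have "((\<lambda>t. f (x + t *\<^sub>R d)) has_derivative (\<lambda>h. G (x + t *\<^sub>R d) \<bullet> (h *\<^sub>R d))) (at t)"
      using has_derivative_compose[OF l fd] by simp
    then have "((\<lambda>t. f (x + t *\<^sub>R d)) has_derivative (\<lambda>h. (G (x + t *\<^sub>R d) \<bullet> d) * h)) (at t)"
      by (simp add: inner_scaleR_right mult.commute)
    then have a: "DERIV (\<lambda>t. f (x + t *\<^sub>R d)) t :> G (x + t *\<^sub>R d) \<bullet> d"
      by (simp add: has_field_derivative_def)
    show ?thesis unfolding \<phi>_def \<phi>'_def
      by (rule derivative_eq_intros a refl | simp)+
  qed
  have neg: "\<phi>' t \<le> 0" if "t \<ge> 0" for t
  proof -
    have "(G (x + t *\<^sub>R d) - G x) \<bullet> d \<le> norm (G (x + t *\<^sub>R d) - G x) * norm d"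
      by (rule norm_cauchy_schwarz)
    also have "\<dots> \<le> L * norm (t *\<^sub>R d) * norm d"
      using lip[of "x + t *\<^sub>R d" x] by (simp add: mult_right_mono)
    also have "\<dots> = L * t * (norm d)^2" using that by (simp add: power2_eq_square)
    finally show ?thesis unfolding \<phi>'_def by (simp add: inner_diff_left)
  qed
  obtain z where z: "0 < z" "z < 1" "\<phi> 1 - \<phi> 0 = (1 - 0) * \<phi>' z"
    using MVT2[of 0 1 \<phi> \<phi>'] der by auto
  then have "\<phi> 1 \<le> \<phi> 0" using neg[of z] by simp
  then show ?thesis unfolding \<phi>_def d_def by simp
qed

lemma coord:
  fixes eta eps w c lk L d u t g :: real
  assumes eta: "eta > 0" and eps: "eps > 0" and w: "eps \<le> w" "w \<le> c" and lk: "0 \<le> lk" "lk \<le> 1 / (10 * eta)"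
    and L: "0 \<le> L" "L \<le> eps / (3 * eta)"
    and st: "w * d * (1 / eta + lk) = - (u + lk * w * t)"
  shows "g * d + L / 2 * d^2 + lk / 2 * w * (t + d)^2
     \<le> lk / 2 * w * t^2 - eta / (4 * c) * (u + lk * w * t)^2 + eta / (2 * eps) * (g - u)^2"
proof -
  define h where "h = 1 / eta + lk"
  define v where "v = u + lk * w * t"
  have wpos: "w > 0" using w eps by linarith
  have cpos: "c > 0" using w wpos by linarith
  have s1: "v^2 = w^2 * d^2 * h^2"
  proof -
    have "v = - (w * d * h)" using st unfolding v_def h_def by simp
    then show ?thesis by (simp add: power_mult_distrib)
  qed
  have "w^2 \<le> c * w" using w wpos by (simp add: power2_eq_square mult_right_mono)
  then have s2: "v^2 \<le> c * w * d^2 * h^2" unfolding s1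
    by (intro mult_right_mono) (auto intro: mult_right_mono)
  have h0: "0 \<le> h" unfolding h_def using eta lk by simp
  have "h \<le> 11 / (10 * eta)" unfolding h_def using lk eta by (simp add: field_simps)
  then have s3: "h^2 \<le> (11 / (10 * eta))^2" using h0 by (intro power_mono) auto
  have s4: "eta / (4 * c) * v^2 \<le> eta / 4 * (w * d^2) * h^2"
  proof -
    have "eta / (4 * c) * v^2 \<le> eta / (4 * c) * (c * w * d^2 * h^2)"
      using s2 eta cpos by (intro mult_left_mono) auto
    also have "\<dots> = eta / 4 * (w * d^2) * h^2" using cpos by (simp add: field_simps)
    finally show ?thesis .
  qed
  have wd: "0 \<le> w * d^2" using wpos by simp
  have s4': "eta / 4 * (w * d^2) * h^2 \<le> eta / 4 * (w * d^2) * (11 / (10 * eta))^2"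
    using s3 wd eta by (intro mult_left_mono) auto
  have s4'': "eta / 4 * (w * d^2) * (11 / (10 * eta))^2 = 121 / 400 * (w * d^2) / eta"
    using eta by (simp add: field_simps power2_eq_square)
  have s5: "(g - u) * d \<le> eta / (2 * eps) * (g - u)^2 + eps / (2 * eta) * d^2"
  proof -
    have "0 \<le> (eta * (g - u) - eps * d)^2 / (2 * eps * eta)" using eps eta by simp
    also have "\<dots> = eta / (2 * eps) * (g - u)^2 + eps / (2 * eta) * d^2 - (g - u) * d"
      using eps eta by (simp add: field_simps power2_eq_square)
    finally show ?thesis by simp
  qed
  have s6: "eps / (2 * eta) * d^2 \<le> (w * d^2) / (2 * eta)"
    using w eta by (simp add: divide_right_mono mult_right_mono)
  have s7: "L / 2 * d^2 \<le> (w * d^2) / (6 * eta)"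
  proof -
    have "L * d^2 \<le> eps / (3 * eta) * d^2" using L(2) by (intro mult_right_mono) auto
    also have "\<dots> \<le> w / (3 * eta) * d^2" using w eta by (simp add: divide_right_mono mult_right_mono)
    finally show ?thesis by (simp add: field_simps)
  qed
  have u_eq: "u = - (w * d * h) - lk * w * t" using st unfolding h_def by simp
  have s8: "g * d + L / 2 * d^2 + lk / 2 * w * (t + d)^2 - lk / 2 * w * t^2
      = (g - u) * d - (w * d^2) / eta - lk / 2 * (w * d^2) + L / 2 * d^2"
    unfolding u_eq h_def using eta by (simp add: field_simps power2_eq_square)
  have s9: "0 \<le> lk / 2 * (w * d^2)" using lk wd by simp
  have "(w * d^2) / (2 * eta) + (w * d^2) / (6 * eta) - (w * d^2) / eta + 121 / 400 * (w * d^2) / eta \<le> 0"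
  proof -
    have "(w * d^2) / (2 * eta) + (w * d^2) / (6 * eta) - (w * d^2) / eta + 121 / 400 * (w * d^2) / eta
        = - (37 / 1200) * ((w * d^2) / eta)" by (simp add: field_simps)
    also have "\<dots> \<le> 0" using wd eta by simp
    finally show ?thesis .
  qed
  then show ?thesis using s4 s4' s4'' s5 s6 s7 s8 s9 unfolding v_def by linarith
qed

lemma sep:
  fixes \<phi> :: "'d::finite \<Rightarrow> real \<Rightarrow> real" and x :: "real ^ 'd"
  assumes "(\<Sum>j\<in>UNIV. \<phi> j (x $ j)) \<le> (\<Sum>j\<in>UNIV. \<phi> j ((\<chi> j. if j = i then s else x $ j) $ j))"
  shows "\<phi> i (x $ i) \<le> \<phi> i s"
proof -
  have "(\<Sum>j\<in>UNIV. \<phi> j (x $ j)) = \<phi> i (x $ i) + (\<Sum>j\<in>UNIV - {i}. \<phi> j (x $ j))"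
    by (simp add: sum.remove)
  moreover have "(\<Sum>j\<in>UNIV. \<phi> j ((\<chi> j. if j = i then s else x $ j) $ j)) = \<phi> i s + (\<Sum>j\<in>UNIV - {i}. \<phi> j (x $ j))"
    by (simp add: sum.remove[of UNIV i])
  ultimately show ?thesis using assms by simp
qed

lemma quad:
  fixes a b x :: real
  assumes a: "a > 0" and h: "\<And>s. a * x^2 + b * x \<le> a * s^2 + b * s"
  shows "2 * a * x + b = 0"
proof -
  have "a * x^2 + b * x \<le> a * (- b / (2 * a))^2 + b * (- b / (2 * a))" by (rule h)
  then have "(2 * a * x + b)^2 / (4 * a) \<le> 0"
    using a by (simp add: field_simps power2_eq_square)
  then have "(2 * a * x + b)^2 \<le> 0" using a by (simp add: divide_le_0_iff)
  then show ?thesis by simp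
qed

lemma normsq: "(norm (x :: real ^ 'd))^2 = (\<Sum>i\<in>UNIV. (x $ i)^2)"
  proof -
  have "(norm x)^2 = x \<bullet> x" by (simp add: power2_norm_eq_inner)
  then show ?thesis by (simp add: inner_vec_def power2_eq_square)
qed

theorem mainTheorem3:
  fixes f :: "real ^ 'd \<Rightarrow> real" and G :: "real ^ 'd \<Rightarrow> real ^ 'd"
    and L eps c_inf lam mu eta :: real
    and n :: "nat \<Rightarrow> real ^ 'd"
    and k :: nat and theta u theta' :: "real ^ 'd"
  assumes smooth: "L_smooth L f G" and L_pos: "L > 0"
    and eps_pos: "eps > 0" and c_pos: "c_inf > 0" and lam_pos: "lam > 0"
    and mu: "0 \<le> mu" "mu < 1"
    and n_nonneg: "\<And>j i. n j $ i \<ge> 0"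
    and n_bound: "\<And>j i. sqrt (n j $ i) + eps \<le> c_inf"
    and n_ratio: "\<And>j i. (sqrt (n j $ i) + eps) / (sqrt (n (Suc j) $ i) + eps) \<ge> 1 - mu"
    and eta: "0 < eta" "eta \<le> min (eps / (3 * L)) (1 / (10 * lam))"
    and argmin: "\<And>th.
        lam * (1 - mu) ^ k / 2 * wsqnorm eps (n k) theta' + f theta + u \<bullet> (theta' - theta)
          + 1 / (2 * eta) * wsqnorm eps (n k) (theta' - theta)
        \<le> lam * (1 - mu) ^ k / 2 * wsqnorm eps (n k) th + f theta + u \<bullet> (th - theta)
          + 1 / (2 * eta) * wsqnorm eps (n k) (th - theta)"
  shows "f theta' + lam * (1 - mu) ^ Suc k / 2 * wsqnorm eps (n (Suc k)) theta'
      \<le> f theta + lam * (1 - mu) ^ k / 2 * wsqnorm eps (n k) theta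
         - eta / (4 * c_inf) * (norm (u + (lam * (1 - mu) ^ k) *\<^sub>R (\<chi> i. (sqrt (n k $ i) + eps) * theta $ i)))\<^sup>2
         + eta / (2 * eps) * (norm (G theta - u))\<^sup>2"
proof -
  define lk where "lk = lam * (1 - mu) ^ k"
  define w where "w i = sqrt (n k $ i) + eps" for i
  define w' where "w' i = sqrt (n (Suc k) $ i) + eps" for i
  define d where "d = theta' - theta"
  define \<phi> where "\<phi> j s = lk / 2 * w j * s^2 + u $ j * (s - theta $ j) + 1 / (2 * eta) * w j * (s - theta $ j)^2" for j s
  have wge: "eps \<le> w i" for i unfolding w_def using n_nonneg by simp
  have wle: "w i \<le> c_inf" for i unfolding w_def using n_bound by simp
  have wpos: "w i > 0" for i using wge[of i] eps_pos by linarith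
  have lk0: "0 \<le> lk" unfolding lk_def using lam_pos mu by simp
  have lkle: "lk \<le> lam" unfolding lk_def using lam_pos mu
    by (simp add: mult_left_le power_le_one)
  have lketa: "lk \<le> 1 / (10 * eta)"
  proof -
    have "lam \<le> 1 / (10 * eta)" using eta lam_pos by (simp add: field_simps)
    then show ?thesis using lkle by linarith
  qed
  have Leta: "L \<le> eps / (3 * eta)" using eta L_pos by (simp add: field_simps)
  have Phi: "lk / 2 * wsqnorm eps (n k) th + f theta + u \<bullet> (th - theta)
          + 1 / (2 * eta) * wsqnorm eps (n k) (th - theta) = f theta + (\<Sum>j\<in>UNIV. \<phi> j (th $ j))" for th
  proof -
    have "lk / 2 * wsqnorm eps (n k) th + u \<bullet> (th - theta) + 1 / (2 * eta) * wsqnorm eps (n k) (th - theta)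
      = (\<Sum>j\<in>UNIV. lk / 2 * (w j * (th $ j)^2) + u $ j * (th $ j - theta $ j) + 1 / (2 * eta) * (w j * (th $ j - theta $ j)^2))"
      unfolding wsqnorm_def inner_vec_def w_def by (simp add: sum_distrib_left sum.distrib)
    also have "\<dots> = (\<Sum>j\<in>UNIV. \<phi> j (th $ j))"
      by (rule sum.cong) (simp_all add: \<phi>_def algebra_simps)
    finally show ?thesis by simp
  qed
  have stat: "w i * d $ i * (1 / eta + lk) = - (u $ i + lk * w i * theta $ i)" for i
  proof -
    have "\<phi> i (theta' $ i) \<le> \<phi> i s" for s
      apply (rule sep)
      using argmin[of "\<chi> j. if j = i then s else theta' $ j"] unfolding lk_def[symmetric] Phi by simp
    define a where "a = (lk + 1 / eta) * w i / 2"
    define b where "b = u $ i - w i * theta $ i / eta"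
    have phiq: "\<phi> i s = a * s^2 + b * s + (- u $ i * theta $ i + w i * (theta $ i)^2 / (2 * eta))" for s
      unfolding \<phi>_def a_def b_def using eta(1) by (simp add: field_simps power2_eq_square)
    have apos: "a > 0" unfolding a_def using lk0 eta(1) wpos[of i] by (intro divide_pos_pos mult_pos_pos add_nonneg_pos) auto
    have "2 * a * theta' $ i + b = 0"
      by (rule quad[OF apos]) (use \<open>\<And>s. \<phi> i (theta' $ i) \<le> \<phi> i s\<close> phiq in auto)
    then have E: "lk * w i * theta' $ i + w i * theta' $ i / eta = w i * theta $ i / eta - u $ i"
      unfolding a_def b_def by (simp add: algebra_simps add_divide_distrib)
    have "w i * d $ i * (1 / eta + lk) = (lk * w i * theta' $ i + w i * theta' $ i / eta) - w i * theta $ i / eta - lk * w i * theta $ i"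
      unfolding d_def by (simp add: algebra_simps)
    then show ?thesis unfolding E by simp
  qed
  have per: "G theta $ i * d $ i + L / 2 * (d $ i)^2 + lk / 2 * w i * (theta' $ i)^2
     \<le> lk / 2 * w i * (theta $ i)^2 - eta / (4 * c_inf) * (u $ i + lk * w i * theta $ i)^2
        + eta / (2 * eps) * (G theta $ i - u $ i)^2" for i
  proof -
    have "theta' $ i = theta $ i + d $ i" unfolding d_def by simp
    then show ?thesis
      using coord[OF eta(1) eps_pos wge[of i] wle[of i] lk0 lketa less_imp_le[OF L_pos] Leta stat[of i], of "G theta $ i"]
      by simp
  qed
  have B: "lam * (1 - mu) ^ Suc k / 2 * wsqnorm eps (n (Suc k)) theta' \<le> (\<Sum>i\<in>UNIV. lk / 2 * w i * (theta' $ i)^2)"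
  proof -
    have "lam * (1 - mu) ^ Suc k / 2 * wsqnorm eps (n (Suc k)) theta' = (\<Sum>i\<in>UNIV. lk / 2 * ((1 - mu) * w' i) * (theta' $ i)^2)"
      unfolding wsqnorm_def sum_distrib_left by (rule sum.cong) (simp_all add: lk_def w'_def field_simps)
    also have "\<dots> \<le> (\<Sum>i\<in>UNIV. lk / 2 * w i * (theta' $ i)^2)"
    proof (rule sum_mono)
      fix i
      have w'pos: "w' i > 0" unfolding w'_def using eps_pos n_nonneg[of "Suc k" i] by (intro add_nonneg_pos) auto
      have "(1 - mu) * w' i \<le> w i" using n_ratio[of k i] w'pos unfolding w_def w'_def
        by (simp add: field_simps)
      then show "lk / 2 * ((1 - mu) * w' i) * (theta' $ i)^2 \<le> lk / 2 * w i * (theta' $ i)^2"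
        using lk0 by (intro mult_right_mono mult_left_mono) auto
    qed
    finally show ?thesis .
  qed
  have A: "f theta' \<le> f theta + G theta \<bullet> d + L / 2 * (\<Sum>i\<in>UNIV. (d $ i)^2)"
    using descent[OF smooth, of theta' theta] unfolding d_def normsq by simp
  have S: "(\<Sum>i\<in>UNIV. G theta $ i * d $ i + L / 2 * (d $ i)^2 + lk / 2 * w i * (theta' $ i)^2)
     \<le> (\<Sum>i\<in>UNIV. lk / 2 * w i * (theta $ i)^2 - eta / (4 * c_inf) * (u $ i + lk * w i * theta $ i)^2
        + eta / (2 * eps) * (G theta $ i - u $ i)^2)"
    by (rule sum_mono) (rule per)
  have e1: "(\<Sum>i\<in>UNIV. G theta $ i * d $ i + L / 2 * (d $ i)^2 + lk / 2 * w i * (theta' $ i)^2)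
     = G theta \<bullet> d + L / 2 * (\<Sum>i\<in>UNIV. (d $ i)^2) + (\<Sum>i\<in>UNIV. lk / 2 * w i * (theta' $ i)^2)"
    by (simp add: sum.distrib sum_distrib_left inner_vec_def)
  have e2: "(\<Sum>i\<in>UNIV. lk / 2 * w i * (theta $ i)^2 - eta / (4 * c_inf) * (u $ i + lk * w i * theta $ i)^2
        + eta / (2 * eps) * (G theta $ i - u $ i)^2)
     = lk / 2 * wsqnorm eps (n k) theta
         - eta / (4 * c_inf) * (norm (u + lk *\<^sub>R (\<chi> i. (sqrt (n k $ i) + eps) * theta $ i)))\<^sup>2
         + eta / (2 * eps) * (norm (G theta - u))\<^sup>2"
    unfolding normsq wsqnorm_def w_def
    by (simp add: sum.distrib sum_subtractf sum_distrib_left algebra_simps)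
  show ?thesis using A B S e1 e2 unfolding lk_def by linarith
qed

end
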